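(* Every metric space $(X,d)$ with the separated approximation property (SAP) has the locally finite approximation property (LFAP).
   Context: A metric space $(X,d)$ has the separated approximation property (SAP) if for each $\varepsilon>0$ there is a sequence of continuous maps $f_n:X\to X$, $n\in\omega$, such that each $f_n$ is $\varepsilon$-homotopic to $\mathrm{id}_X$ and $\inf_{n\ne m} d(f_n(X),f_m(X))>0$, where $d(A,B)=\inf\{d(a,b):a\in A,\ b\in B\}$. Two maps $f,g:A\to X$ are $\varepsilon$-homotopic if there is a homotopy $(h_t)_{t\in[0,1]}:A\to X$ with $h_0=f$, $h_1=g$ and $\operatorname{diam}\{h_t(a):t\in[0,1]\}\le\varepsilon$ for all $a\in A$. A topological space $X$ has the locally finite approximation property (LFAP) if for each open cover $\mathcal U$ of $X$ there is a sequence of continuous maps $f_n:X\to X$, $n\in\omega$, each $\mathcal U$-near to $\mathrm{id}_X$ (for every $x$ some $U\in\mathcal U$ contains both $x$ and $f_n(x)$), such that the family $(f_n(X))_{n\in\omega}$ is locally finite in $X$. *)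

theory Defs
  imports "HOL-Analysis.Analysis"
begin

text \<open>The metric space (X,d) is a subset S of a type of class metric_space, with the
  induced metric and the subspace topology.\<close>

definition eps_homotopic ::
  "real \<Rightarrow> 'a set \<Rightarrow> 'b::metric_space set \<Rightarrow> ('a::topological_space \<Rightarrow> 'b) \<Rightarrow> ('a \<Rightarrow> 'b) \<Rightarrow> bool" where
  "eps_homotopic e S T f g \<longleftrightarrow>
     (\<exists>h. continuous_on ({0..1::real} \<times> S) h \<and> h ` ({0..1} \<times> S) \<subseteq> T \<and>
          (\<forall>x\<in>S. h (0, x) = f x) \<and> (\<forall>x\<in>S. h (1, x) = g x) \<and>
          (\<forall>a\<in>S. diameter ((\<lambda>t. h (t, a)) ` {0..1}) \<le> e))"

text \<open>Separated approximation property. The condition inf_{n<>m} d(f_n X, f_m X) > 0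
  is written out as: there is delta > 0 with dist a b >= delta whenever
  a in f_n X, b in f_m X, n <> m.\<close>
definition SAP :: "'a::metric_space set \<Rightarrow> bool" where
  "SAP X \<longleftrightarrow>
     (\<forall>e>0. \<exists>f :: nat \<Rightarrow> 'a \<Rightarrow> 'a.
        (\<forall>n. continuous_on X (f n) \<and> f n ` X \<subseteq> X \<and> eps_homotopic e X X (f n) id) \<and>
        (\<exists>\<delta>>0. \<forall>n m. n \<noteq> m \<longrightarrow> (\<forall>a\<in>f n ` X. \<forall>b\<in>f m ` X. \<delta> \<le> dist a b)))"

definition LFAP :: "'a topology \<Rightarrow> bool" where
  "LFAP X \<longleftrightarrow>
     (\<forall>\<U>. (\<forall>U\<in>\<U>. openin X U) \<and> topspace X \<subseteq> \<Union>\<U> \<longrightarrow>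
        (\<exists>f :: nat \<Rightarrow> 'a \<Rightarrow> 'a.
           (\<forall>n. continuous_map X X (f n) \<and>
                (\<forall>x\<in>topspace X. \<exists>U\<in>\<U>. x \<in> U \<and> f n x \<in> U)) \<and>
           (\<forall>x\<in>topspace X. \<exists>V. openin X V \<and> x \<in> V \<and>
                finite {n. f n ` topspace X \<inter> V \<noteq> {}})))"

end

theory Submission
  imports Defs
begin

lemma lebesgue_fun:
  fixes X :: "'a::metric_space set"
  assumes opn: "\<forall>U\<in>\<U>. openin (top_of_set X) U" and cov: "X \<subseteq> \<Union>\<U>"
  obtains \<phi> :: "'a \<Rightarrow> real" where "continuous_on X \<phi>" "\<forall>x\<in>X. 0 < \<phi> x \<and> \<phi> x \<le> 1"
    "\<forall>x\<in>X. \<exists>U\<in>\<U>. \<forall>y\<in>X. dist x y < \<phi> x \<longrightarrow> y \<in> U"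
proof -
  define R where "R x = {r::real. 0 \<le> r \<and> r \<le> 1 \<and> (\<exists>U\<in>\<U>. ball x r \<inter> X \<subseteq> U)}" for x
  define f where "f x = Sup (R x)" for x
  have bdd: "bdd_above (R x)" for x unfolding R_def by (rule bdd_aboveI[of _ 1]) auto
  have pos: "0 < f x \<and> f x \<le> 1 \<and> R x \<noteq> {}" if xX: "x \<in> X" for x
  proof -
    obtain U where U: "U \<in> \<U>" "x \<in> U" using cov xX by auto
    then obtain T where T: "open T" "U = X \<inter> T" using opn by (auto simp: openin_open)
    then obtain e where e: "e > 0" "ball x e \<subseteq> T" using U open_contains_ball by blast
    have "ball x (min e 1) \<inter> X \<subseteq> U" using e T by auto
    then have "min e 1 \<in> R x" unfolding R_def using e U by auto
    then have "min e 1 \<le> f x" unfolding f_def using bdd by (rule cSup_upper)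
    moreover have "f x \<le> 1" unfolding f_def
      apply (rule cSup_least) using \<open>min e 1 \<in> R x\<close> apply blast by (simp add: R_def)
    ultimately show ?thesis using e \<open>min e 1 \<in> R x\<close> by auto
  qed
  have lip: "f x - dist x y \<le> f y" if "x \<in> X" "y \<in> X" for x y
  proof (rule ccontr)
    assume "\<not> ?thesis"
    then have lt: "f y + dist x y < Sup (R x)" unfolding f_def by auto
    have ne: "R x \<noteq> {}" using pos[OF that(1)] by auto
    obtain r where r: "r \<in> R x" "f y + dist x y < r" using less_cSup_iff[OF ne bdd] lt by auto
    have "r - dist x y \<in> R y"
    proof -
      obtain U where U: "U \<in> \<U>" "ball x r \<inter> X \<subseteq> U" using r unfolding R_def by auto
      have "ball y (r - dist x y) \<subseteq> ball x r"
        by (auto simp: ball_def) (metis dist_triangle add.commute le_less_trans less_diff_eq)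
      moreover have "0 \<le> r - dist x y" using r(2) pos[OF that(2)] by auto
      moreover have "r - dist x y \<le> 1"
      proof -
        have "r \<le> 1" using r(1) unfolding R_def by auto
        then show ?thesis using zero_le_dist[of x y] by linarith
      qed
      ultimately show ?thesis using U r unfolding R_def by blast
    qed
    then have "r - dist x y \<le> f y" unfolding f_def using bdd by (rule cSup_upper)
    then show False using r by auto
  qed
  have cont: "continuous_on X f"
    unfolding continuous_on_iff
  proof (intro ballI allI impI)
    fix x e assume "x \<in> X" "(0::real) < e"
    show "\<exists>d>0. \<forall>x'\<in>X. dist x' x < d \<longrightarrow> dist (f x') (f x) < e"
    proof (intro exI[of _ e] conjI ballI impI)
      fix x' assume "x' \<in> X" "dist x' x < e"
      then show "dist (f x') (f x) < e"
        using lip[OF \<open>x \<in> X\<close> \<open>x' \<in> X\<close>] lip[OF \<open>x' \<in> X\<close> \<open>x \<in> X\<close>]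
        by (auto simp: dist_real_def dist_commute)
    qed (use \<open>0 < e\<close> in auto)
  qed
  have near: "\<exists>U\<in>\<U>. \<forall>y\<in>X. dist x y < f x / 2 \<longrightarrow> y \<in> U" if "x \<in> X" for x
  proof -
    have ne: "R x \<noteq> {}" using pos[OF that] by auto
    have "f x / 2 < Sup (R x)" using pos[OF that] unfolding f_def by auto
    then obtain r where r: "r \<in> R x" "f x / 2 < r" using less_cSup_iff[OF ne bdd] by auto
    then obtain U where U: "U \<in> \<U>" "ball x r \<inter> X \<subseteq> U" unfolding R_def by auto
    show ?thesis using U r by (intro bexI[of _ U]) auto
  qed
  show ?thesis
    apply (rule that[of "\<lambda>x. f x / 2"])
    using cont apply (auto intro!: continuous_intros)[1]
    using pos apply force
    using near by blast
qed


lemma track_bound: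
  fixes h :: "real \<times> 'a::metric_space \<Rightarrow> 'b::metric_space"
  assumes "continuous_on ({0..1} \<times> X) h" "a \<in> X" "t \<in> {0..1}" "s \<in> {0..1}"
    "diameter ((\<lambda>t. h (t, a)) ` {0..1}) \<le> e"
  shows "dist (h (t, a)) (h (s, a)) \<le> e"
proof -
  have "continuous_on {0..1} (\<lambda>t. h (t, a))"
    by (rule continuous_on_compose2[OF assms(1)]) (use assms(2) in \<open>auto intro!: continuous_intros\<close>)
  then have "compact ((\<lambda>t. h (t, a)) ` {0..1})" by (intro compact_continuous_image) auto
  then have "bounded ((\<lambda>t. h (t, a)) ` {0..1})" by (rule compact_imp_bounded)
  then have "dist (h (t, a)) (h (s, a)) \<le> diameter ((\<lambda>t. h (t, a)) ` {0..1})"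
    by (rule diameter_bounded_bound) (use assms in auto)
  then show ?thesis using assms(5) by linarith
qed

definition goodH :: "'a::metric_space set \<Rightarrow> real \<Rightarrow> (nat \<Rightarrow> real \<times> 'a \<Rightarrow> 'a) \<Rightarrow> real \<Rightarrow> bool" where
  "goodH X e H \<delta> \<longleftrightarrow> (\<forall>n. continuous_on ({0..1} \<times> X) (H n) \<and> H n ` ({0..1} \<times> X) \<subseteq> X \<and>
       (\<forall>x\<in>X. H n (1, x) = x) \<and>
       (\<forall>a\<in>X. \<forall>t\<in>{0..1}. dist (H n (t, a)) a \<le> e \<and> dist (H n (t, a)) (H n (0, a)) \<le> e)) \<and>
     \<delta> > 0 \<and> (\<forall>n m a b. n \<noteq> m \<longrightarrow> a \<in> X \<longrightarrow> b \<in> X \<longrightarrow> \<delta> \<le> dist (H n (0, a)) (H m (0, b)))"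

lemma sap_extract:
  fixes X :: "'a::metric_space set"
  assumes "SAP X" "e > 0"
  shows "\<exists>H \<delta>. goodH X e H \<delta>"
proof -
  have "\<exists>f::nat\<Rightarrow>'a\<Rightarrow>'a. (\<forall>n. continuous_on X (f n) \<and> f n ` X \<subseteq> X \<and> eps_homotopic e X X (f n) id) \<and>
        (\<exists>\<delta>>0. \<forall>n m. n \<noteq> m \<longrightarrow> (\<forall>a\<in>f n ` X. \<forall>b\<in>f m ` X. \<delta> \<le> dist a b))"
    by (rule assms(1)[unfolded SAP_def, rule_format, OF assms(2)])
  then obtain f :: "nat \<Rightarrow> 'a \<Rightarrow> 'a" where f0: "(\<forall>n. continuous_on X (f n) \<and> f n ` X \<subseteq> X \<and> eps_homotopic e X X (f n) id) \<and>
        (\<exists>\<delta>>0. \<forall>n m. n \<noteq> m \<longrightarrow> (\<forall>a\<in>f n ` X. \<forall>b\<in>f m ` X. \<delta> \<le> dist a b))" ..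
  then have "\<exists>\<delta>>0. \<forall>n m. n \<noteq> m \<longrightarrow> (\<forall>a\<in>f n ` X. \<forall>b\<in>f m ` X. \<delta> \<le> dist a b)" by (rule conjunct2)
  then obtain \<delta> where d: "\<delta> > 0 \<and> (\<forall>n m. n \<noteq> m \<longrightarrow> (\<forall>a\<in>f n ` X. \<forall>b\<in>f m ` X. \<delta> \<le> dist a b))" ..
  have f: "\<And>n. eps_homotopic e X X (f n) id" using f0 by simp
  have "\<forall>n::nat. \<exists>h. continuous_on ({0..1::real} \<times> X) h \<and> h ` ({0..1} \<times> X) \<subseteq> X \<and>
          (\<forall>x\<in>X. h (0, x) = f n x) \<and> (\<forall>x\<in>X. h (1, x) = id x) \<and>
          (\<forall>a\<in>X. diameter ((\<lambda>t. h (t, a)) ` {0..1}) \<le> e)"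
    using f unfolding eps_homotopic_def by simp
  then have "\<exists>H. \<forall>n::nat. continuous_on ({0..1::real} \<times> X) (H n) \<and> H n ` ({0..1} \<times> X) \<subseteq> X \<and>
          (\<forall>x\<in>X. H n (0, x) = f n x) \<and> (\<forall>x\<in>X. H n (1, x) = id x) \<and>
          (\<forall>a\<in>X. diameter ((\<lambda>t. H n (t, a)) ` {0..1}) \<le> e)"
    by (rule choice)
  then obtain H :: "nat \<Rightarrow> real \<times> 'a \<Rightarrow> 'a" where H: "\<forall>n. continuous_on ({0..1::real} \<times> X) (H n) \<and> H n ` ({0..1} \<times> X) \<subseteq> X \<and>
          (\<forall>x\<in>X. H n (0, x) = f n x) \<and> (\<forall>x\<in>X. H n (1, x) = id x) \<and>
          (\<forall>a\<in>X. diameter ((\<lambda>t. H n (t, a)) ` {0..1}) \<le> e)" ..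
  have H1: "continuous_on ({0..1::real} \<times> X) (H n)" for n using H by simp
  have H2: "H n ` ({0..1} \<times> X) \<subseteq> X" for n using H by simp
  have H3: "H n (0, x) = f n x" if "x \<in> X" for n x using H that by simp
  have H4: "H n (1, x) = x" if "x \<in> X" for n x using H that by simp
  have H5: "diameter ((\<lambda>t. H n (t, a)) ` {0..1}) \<le> e" if "a \<in> X" for n a using H that by simp
  have "goodH X e H \<delta>"
    unfolding goodH_def
  proof (intro conjI allI impI ballI)
    fix n
    show "continuous_on ({0..1} \<times> X) (H n)" by (rule H1)
    show "H n ` ({0..1} \<times> X) \<subseteq> X" by (rule H2)
    fix x assume "x \<in> X" then show "H n (1, x) = x" by (rule H4)
  next
    fix n a t assume a: "a \<in> X" and t: "t \<in> {0..1::real}"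
    show "dist (H n (t, a)) a \<le> e"
      using track_bound[OF H1 a t _ H5[OF a], of 1] H4[OF a] by simp
    show "dist (H n (t, a)) (H n (0, a)) \<le> e"
      using track_bound[OF H1 a t _ H5[OF a], of 0] by simp
  next
    fix n m :: nat and a b assume nm: "n \<noteq> m" and a: "a \<in> X" and b: "b \<in> X"
    have "f n a \<in> f n ` X" "f m b \<in> f m ` X" using a b by auto
    then have "\<delta> \<le> dist (f n a) (f m b)" using d nm by blast
    then show "\<delta> \<le> dist (H n (0, a)) (H m (0, b))" using H3[OF a] H3[OF b] by simp
  next
    show "0 < \<delta>" using d by simp
  qed
  then show ?thesis by blast
qed


primrec compC :: "(nat \<Rightarrow> real \<times> 'a \<Rightarrow> 'a) \<Rightarrow> (nat \<Rightarrow> 'a \<Rightarrow> real) \<Rightarrow> nat \<Rightarrow> 'a \<Rightarrow> 'a" where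
  "compC h s 0 y = y"
| "compC h s (Suc j) y = h j (s j y, compC h s j y)"

primrec epsseq :: "(real \<Rightarrow> real) \<Rightarrow> nat \<Rightarrow> real" where
  "epsseq D 0 = 1/8"
| "epsseq D (Suc k) = min (1/2^(k+4)) (D (epsseq D k) / 4)"

lemma pow_bound:
  fixes p :: real
  assumes "0 < p" "- log 2 p < real k + 1"
  shows "1/2^(k+1) < p"
proof -
  have "- real (Suc k) < log 2 p" using assms(2) by simp
  then have lt: "2 powr (- real (Suc k)) < p" using less_log_iff[of 2 p] assms(1) by simp
  have "2 powr (- real (Suc k)) = inverse (2 powr (real (Suc k)))"
    by (rule powr_minus)
  also have "2 powr (real (Suc k)) = (2::real) ^ (Suc k)" by (rule powr_realpow) simp
  finally have "inverse ((2::real) ^ (Suc k)) < p" using lt by simp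
  then show ?thesis by (simp add: inverse_eq_divide)
qed

lemma finite_subsingleton:
  assumes "\<And>n m. n \<in> S \<Longrightarrow> m \<in> S \<Longrightarrow> n = m"
  shows "finite S"
proof (cases "S = {}")
  case False
  then obtain n where "n \<in> S" by auto
  then have "S \<subseteq> {n}" using assms by auto
  then show ?thesis using finite_subset by auto
qed simp

lemma clamp01: "0 \<le> max 0 (min 1 (t::real)) \<and> max 0 (min 1 t) \<le> 1"
  by (simp add: max_def min_def)

lemma clamp_one: "1 \<le> t \<Longrightarrow> max 0 (min 1 (t::real)) = 1"
  by (simp add: max_def min_def)

lemma clamp_zero: "t \<le> 0 \<Longrightarrow> max 0 (min 1 (t::real)) = 0"
  by (simp add: max_def min_def)

lemma core:
  fixes X :: "'a::metric_space set" and h :: "nat \<Rightarrow> nat \<Rightarrow> real \<times> 'a \<Rightarrow> 'a"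
    and \<phi> :: "'a \<Rightarrow> real" and eps del :: "nat \<Rightarrow> real"
  assumes phic: "continuous_on X \<phi>" and phib: "\<And>x. x \<in> X \<Longrightarrow> 0 < \<phi> x \<and> \<phi> x \<le> 1"
    and hc: "\<And>j n. continuous_on ({0..1} \<times> X) (h j n)"
    and hX: "\<And>j n. h j n ` ({0..1} \<times> X) \<subseteq> X"
    and h1: "\<And>j n x. x \<in> X \<Longrightarrow> h j n (1, x) = x"
    and hd1: "\<And>j n a t. a \<in> X \<Longrightarrow> t \<in> {0..1} \<Longrightarrow> dist (h j n (t, a)) a \<le> eps j"
    and hd0: "\<And>j n a t. a \<in> X \<Longrightarrow> t \<in> {0..1} \<Longrightarrow> dist (h j n (t, a)) (h j n (0, a)) \<le> eps j"
    and epsb: "\<And>j. eps j \<le> 1/2^(j+3)"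
    and delp: "\<And>j. del j > 0" and epsd: "\<And>j. eps (Suc j) \<le> del j / 4"
    and sep: "\<And>j n m a b. n \<noteq> m \<Longrightarrow> a \<in> X \<Longrightarrow> b \<in> X \<Longrightarrow> del j \<le> dist (h j n (0, a)) (h j m (0, b))"
  obtains g :: "nat \<Rightarrow> 'a \<Rightarrow> 'a" where
    "\<And>n. continuous_on X (g n)" "\<And>n. g n ` X \<subseteq> X"
    "\<And>n y. y \<in> X \<Longrightarrow> dist (g n y) y < \<phi> y"
    "\<And>x. x \<in> X \<Longrightarrow> \<exists>r>0. finite {n. g n ` X \<inter> ball x r \<noteq> {}}"
proof -
  define L where "L y = - log 2 (\<phi> y)" for y
  define s where "s j y = max 0 (min 1 (2 * \<bar>L y - real j\<bar> - 1))" for j y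
  define lv where "lv y = nat \<lfloor>L y\<rfloor>" for y
  define C where "C n = compC (\<lambda>j. h j n) s" for n
  define g where "g n y = C n (lv y + 2) y" for n y
  have L0: "0 \<le> L y" if "y \<in> X" for y
    using phib[OF that] unfolding L_def by (simp add: log_le_zero_cancel_iff)
  have Lc: "continuous_on X L"
    unfolding L_def
    by (intro continuous_on_minus continuous_on_log continuous_on_const phic) (use phib in force)+
  have lvL: "real (lv y) \<le> L y \<and> L y < real (lv y) + 1" if "y \<in> X" for y
  proof -
    have "0 \<le> \<lfloor>L y\<rfloor>" using L0[OF that] by simp
    then have e: "real (lv y) = real_of_int \<lfloor>L y\<rfloor>" unfolding lv_def by simp
    show ?thesis unfolding e using of_int_floor_le[of "L y"] real_of_int_floor_add_one_gt[of "L y"] by linarith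
  qed
  have s01: "0 \<le> s j y \<and> s j y \<le> 1" for j y unfolding s_def by (rule clamp01)
  have sc: "continuous_on X (s j)" for j
    unfolding s_def[abs_def]
    by (intro continuous_on_max continuous_on_min continuous_on_const continuous_on_diff
        continuous_on_mult continuous_on_rabs Lc)
  have s_low: "s j y = 1" if "y \<in> X" "j < lv y" for j y
  proof -
    have "Suc j \<le> lv y" using that(2) by simp
    then have a: "real j + 1 \<le> real (lv y)" by (metis of_nat_Suc of_nat_le_iff add.commute)
    have b: "1 \<le> L y - real j" using a lvL[OF that(1)] by linarith
    then have "\<bar>L y - real j\<bar> = L y - real j" by simp
    then show ?thesis unfolding s_def using b by (intro clamp_one) simp
  qed
  have s_high: "s j y = 1" if "y \<in> X" "lv y + 2 \<le> j" for j y
  proof -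
    have a: "real (lv y) + 2 \<le> real j" using that(2) by linarith
    have b: "1 \<le> real j - L y" using a lvL[OF that(1)] by linarith
    then have "\<bar>L y - real j\<bar> = real j - L y" by simp
    then show ?thesis unfolding s_def using b by (intro clamp_one) simp
  qed
  have Cc: "continuous_on X (C n N) \<and> C n N ` X \<subseteq> X" for n N
  proof (induction N)
    case 0 then show ?case unfolding C_def by (simp add: continuous_on_id)
  next
    case (Suc N)
    have img: "(\<lambda>y. (s N y, C n N y)) ` X \<subseteq> {0..1} \<times> X" using Suc s01 by auto
    have c1: "continuous_on X (\<lambda>y. (s N y, C n N y))"
      using Suc sc by (auto intro!: continuous_intros)
    have "continuous_on X (\<lambda>y. h N n (s N y, C n N y))"
      by (rule continuous_on_compose2[OF hc c1 img])
    moreover have "(\<lambda>y. h N n (s N y, C n N y)) ` X \<subseteq> X" using hX[of N n] img by auto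
    ultimately show ?case unfolding C_def by simp
  qed
  have CX: "C n N y \<in> X" if "y \<in> X" for n N y using Cc that by auto
  have C_low: "C n N y = y" if "y \<in> X" "N \<le> lv y" for n N y
    using that(2)
  proof (induction N)
    case 0 then show ?case unfolding C_def by simp
  next
    case (Suc N)
    then have "C n N y = y" by simp
    moreover have "s N y = 1" using s_low[OF that(1)] Suc.prems by simp
    ultimately show ?case unfolding C_def using h1[OF that(1)] by simp
  qed
  have C_high: "C n (lv y + 2 + i) y = C n (lv y + 2) y" if "y \<in> X" for n i y
  proof (induction i)
    case (Suc i)
    have "s (lv y + 2 + i) y = 1" using s_high[OF that] by simp
    have "C n (lv y + 2 + Suc i) y = h (lv y + 2 + i) n (s (lv y + 2 + i) y, C n (lv y + 2 + i) y)"
      unfolding C_def by (simp only: add_Suc_right compC.simps(2))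
    also have "\<dots> = C n (lv y + 2 + i) y" using \<open>s (lv y + 2 + i) y = 1\<close> h1[OF CX[OF that]] by simp
    also have "\<dots> = C n (lv y + 2) y" by (rule Suc.IH)
    finally show ?case .
  qed simp
  have g_form: "g n y = h (lv y + 1) n (s (lv y + 1) y, h (lv y) n (s (lv y) y, y))" if "y \<in> X" for n y
  proof -
    have "C n (lv y) y = y" by (rule C_low[OF that]) simp
    then show ?thesis unfolding g_def C_def by (simp add: numeral_2_eq_2)
  qed
  have inner: "h (lv y) n (s (lv y) y, y) \<in> X" if "y \<in> X" for n y
    using hX[of "lv y" n] s01 that by auto
  have gX: "g n ` X \<subseteq> X" for n
  proof
    fix z assume "z \<in> g n ` X"
    then obtain y where y: "y \<in> X" "z = g n y" by auto
    show "z \<in> X" using hX[of "lv y + 1" n] s01 inner[OF y(1)] g_form[OF y(1)] y(2) by auto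
  qed
  have g_near: "dist (g n y) y < \<phi> y" if y: "y \<in> X" for n y
  proof -
    let ?k = "lv y"
    let ?z = "h ?k n (s ?k y, y)"
    have "dist (g n y) ?z \<le> eps (?k + 1)"
      using g_form[OF y] hd1[OF inner[OF y], of "s (?k+1) y" "?k+1" n] s01 by auto
    moreover have "dist ?z y \<le> eps ?k" using hd1[OF y, of "s ?k y" ?k n] s01 by auto
    ultimately have "dist (g n y) y \<le> eps (?k+1) + eps ?k"
      using dist_triangle[of "g n y" y ?z] by linarith
    also have "\<dots> \<le> 1/2^(?k+4) + 1/2^(?k+3)" using epsb[of ?k] epsb[of "?k+1"] by (simp add: add.commute)
    also have "\<dots> < 1/2^(?k+1)"
    proof -
      have p: "(0::real) < 2^?k" by simp
      show ?thesis using p by (simp add: power_add divide_simps)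
    qed
    also have "\<dots> < \<phi> y"
      using pow_bound[of "\<phi> y" ?k] phib[OF y] lvL[OF y] unfolding L_def by simp
    finally show ?thesis .
  qed
  have g_class: "\<exists>j\<le>lv y + 1. \<exists>a\<in>X. dist (g n y) (h j n (0, a)) \<le> eps (Suc j)" if y: "y \<in> X" for n y
  proof (cases "L y - real (lv y) \<le> 1/2")
    case True
    have "\<bar>L y - real (lv y)\<bar> = L y - real (lv y)" using lvL[OF y] by simp
    then have "s (lv y) y = 0" unfolding s_def using True by (intro clamp_zero) simp
    then have "dist (g n y) (h (lv y) n (0, y)) \<le> eps (Suc (lv y))"
      using g_form[OF y] hd1[OF inner[OF y], of "s (lv y + 1) y" "lv y + 1" n] s01 by auto
    then show ?thesis using y by (intro exI[of _ "lv y"]) auto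
  next
    case False
    have "\<bar>L y - real (lv y + 1)\<bar> = real (lv y) + 1 - L y" using lvL[OF y] by simp
    then have "s (lv y + 1) y = 0" unfolding s_def using False by (intro clamp_zero) simp
    then have gy: "g n y = h (lv y + 1) n (0, h (lv y) n (s (lv y) y, y))" using g_form[OF y] by simp
    have "dist (h (Suc (lv y + 1)) n (0, y)) y \<le> eps (Suc (lv y + 1))" by (rule hd1[OF y]) simp
    then have "0 \<le> eps (Suc (lv y + 1))" using zero_le_dist[of "h (Suc (lv y + 1)) n (0, y)" y] by linarith
    moreover have "dist (g n y) (h (lv y + 1) n (0, h (lv y) n (s (lv y) y, y))) = 0" using gy by simp
    ultimately have "dist (g n y) (h (lv y + 1) n (0, h (lv y) n (s (lv y) y, y))) \<le> eps (Suc (lv y + 1))"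
      by linarith
    then show ?thesis using inner[OF y] by blast
  qed
  have gc: "continuous_on X (g n)" for n
    unfolding continuous_on_eq_continuous_within
  proof
    fix x assume x: "x \<in> X"
    define M where "M = lv x + 3"
    have LM: "L x < real M - 1" using lvL[OF x] unfolding M_def by simp
    then obtain d where d: "d > 0" "\<forall>y\<in>X. dist y x < d \<longrightarrow> dist (L y) (L x) < real M - 1 - L x"
      using Lc[unfolded continuous_on_iff, rule_format, OF x, of "real M - 1 - L x"] by auto
    have eq: "C n M y = g n y" if "y \<in> X" "dist y x < d" for y
    proof -
      have "dist (L y) (L x) < real M - 1 - L x" using d(2) that by blast
      then have "L y < real M - 1" by (simp add: dist_real_def abs_less_iff)
      then have "real (lv y + 1) < real M" using lvL[OF that(1)] by simp
      then have "lv y + 2 \<le> M" by linarith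
      then obtain i where "M = lv y + 2 + i" by (metis le_add_diff_inverse)
      then show ?thesis using C_high[OF that(1), of n i] unfolding g_def by simp
    qed
    have "continuous (at x within X) (C n M)"
      using Cc[of n M] continuous_on_eq_continuous_within x by blast
    then show "continuous (at x within X) (g n)"
      by (rule continuous_transform_within[OF _ d(1) x]) (use eq in auto)
  qed
  have lf: "\<exists>r>0. finite {n. g n ` X \<inter> ball x r \<noteq> {}}" if x: "x \<in> X" for x
  proof -
    have "\<phi> x / 2 > 0" using phib[OF x] by simp
    then obtain \<rho> where \<rho>: "\<rho> > 0" "\<forall>y\<in>X. dist y x < \<rho> \<longrightarrow> dist (\<phi> y) (\<phi> x) < \<phi> x / 2"
      using phic[unfolded continuous_on_iff, rule_format, OF x, of "\<phi> x / 2"] by auto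
    define c where "c = min (\<rho>/2) (\<phi> x/2)"
    have c0: "c > 0" using \<rho> phib[OF x] unfolding c_def by simp
    define K where "K = nat \<lfloor>- log 2 c\<rfloor>"
    define r where "r = min (\<rho>/2) (Min ((\<lambda>j. del j / 4) ` {..K+1}))"
    have r0: "r > 0" unfolding r_def using \<rho> delp by (simp add: Min_gr_iff)
    have rdel: "r \<le> del j / 4" if "j \<le> K+1" for j
      unfolding r_def using that by (intro min.coboundedI2 Min_le) auto
    have rrho: "r \<le> \<rho>/2" unfolding r_def by simp
    define S where "S j = {n. \<exists>a\<in>X. \<exists>z. dist z x < r \<and> dist z (h j n (0, a)) \<le> eps (Suc j)}" for j
    have Sfin: "finite (S j)" if j: "j \<le> K+1" for j
    proof (rule finite_subsingleton)
      fix n m assume "n \<in> S j" "m \<in> S j"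
      then obtain a b z w where ab: "a \<in> X" "b \<in> X" "dist z x < r" "dist z (h j n (0, a)) \<le> eps (Suc j)"
        "dist w x < r" "dist w (h j m (0, b)) \<le> eps (Suc j)" unfolding S_def by blast
      show "n = m"
      proof (rule ccontr)
        assume "n \<noteq> m"
        then have 1: "del j \<le> dist (h j n (0, a)) (h j m (0, b))" using sep ab by blast
        have 2: "dist (h j n (0, a)) (h j m (0, b)) \<le> dist (h j n (0, a)) z + dist z (h j m (0, b))"
          by (rule dist_triangle)
        have 3: "dist z (h j m (0, b)) \<le> dist z x + dist x (h j m (0, b))" by (rule dist_triangle)
        have 4: "dist x (h j m (0, b)) \<le> dist x w + dist w (h j m (0, b))" by (rule dist_triangle)
        have 5: "dist (h j n (0, a)) z = dist z (h j n (0, a))" "dist x w = dist w x"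
          by (simp_all add: dist_commute)
        show False using 1 2 3 4 5 ab rdel[OF j] epsd[of j] by linarith
      qed
    qed
    have sub: "{n. g n ` X \<inter> ball x r \<noteq> {}} \<subseteq> (\<Union>j\<in>{..K+1}. S j)"
    proof
      fix n assume "n \<in> {n. g n ` X \<inter> ball x r \<noteq> {}}"
      then obtain y where y: "y \<in> X" "dist x (g n y) < r" by auto
      have cy: "c \<le> \<phi> y"
      proof (cases "\<rho>/2 \<le> \<phi> y")
        case True then show ?thesis unfolding c_def by simp
      next
        case False
        have "dist y x \<le> dist y (g n y) + dist (g n y) x" by (rule dist_triangle)
        moreover have "dist y (g n y) < \<phi> y" using g_near[OF y(1)] by (simp add: dist_commute)
        moreover have "dist (g n y) x < r" using y(2) by (simp add: dist_commute)
        ultimately have "dist y x < \<rho>" using rrho False by linarith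
        then have "dist (\<phi> y) (\<phi> x) < \<phi> x / 2" using \<rho> y by blast
        then have "\<bar>\<phi> y - \<phi> x\<bar> < \<phi> x / 2" by (simp add: dist_real_def)
        then have "\<phi> x / 2 < \<phi> y" by linarith
        then show ?thesis unfolding c_def by simp
      qed
      have "lv y \<le> K"
      proof -
        have "log 2 c \<le> log 2 (\<phi> y)" using c0 cy by simp
        then have "L y \<le> - log 2 c" unfolding L_def by simp
        then have "\<lfloor>L y\<rfloor> \<le> \<lfloor>- log 2 c\<rfloor>" by (rule floor_mono)
        then show ?thesis unfolding lv_def K_def by (rule nat_mono)
      qed
      obtain j a where ja: "j \<le> lv y + 1" "a \<in> X" "dist (g n y) (h j n (0, a)) \<le> eps (Suc j)"
        using g_class[OF y(1)] by blast
      have "dist (g n y) x < r" using y(2) by (simp add: dist_commute)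
      then have "n \<in> S j" unfolding S_def using ja by blast
      moreover have "j \<in> {..K+1}" using ja \<open>lv y \<le> K\<close> by simp
      ultimately show "n \<in> (\<Union>j\<in>{..K+1}. S j)" by blast
    qed
    have "finite (\<Union>j\<in>{..K+1}. S j)" using Sfin by auto
    then show ?thesis using r0 sub finite_subset by blast
  qed
  show ?thesis by (rule that[OF gc gX g_near lf])
qed

theorem lemma1:
  fixes X :: "'a::metric_space set"
  assumes "SAP X"
  shows "LFAP (top_of_set X)"
  unfolding LFAP_def
proof (intro allI impI)
  fix \<U> :: "'a set set"
  assume "(\<forall>U\<in>\<U>. openin (top_of_set X) U) \<and> topspace (top_of_set X) \<subseteq> \<Union>\<U>"
  then have opn: "\<forall>U\<in>\<U>. openin (top_of_set X) U" and cov: "X \<subseteq> \<Union>\<U>" by auto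
  obtain \<phi> where phic: "continuous_on X \<phi>" and phib: "\<forall>x\<in>X. 0 < \<phi> x \<and> \<phi> x \<le> 1"
    and phiU: "\<forall>x\<in>X. \<exists>U\<in>\<U>. \<forall>y\<in>X. dist x y < \<phi> x \<longrightarrow> y \<in> U"
    using lebesgue_fun[OF opn cov] by blast
  define D where "D e = (SOME \<delta>. \<exists>H. goodH X e H \<delta>)" for e
  define HH where "HH e = (SOME H. goodH X e H (D e))" for e
  have good: "goodH X e (HH e) (D e)" if "e > 0" for e
  proof -
    have "\<exists>\<delta> H. goodH X e H \<delta>" using sap_extract[OF assms that] by blast
    then have "\<exists>H. goodH X e H (D e)" unfolding D_def by (rule someI_ex)
    then show ?thesis unfolding HH_def by (rule someI_ex)
  qed
  define E where "E = epsseq D"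
  have Epos: "E j > 0" for j
  proof (induction j)
    case 0 then show ?case unfolding E_def by simp
  next
    case (Suc k)
    have "D (E k) > 0" using good[OF Suc] unfolding goodH_def by blast
    then show ?case unfolding E_def by simp
  qed
  have G: "goodH X (E j) (HH (E j)) (D (E j))" for j using good[OF Epos] .
  obtain g :: "nat \<Rightarrow> 'a \<Rightarrow> 'a" where gc: "\<And>n. continuous_on X (g n)" and gX: "\<And>n. g n ` X \<subseteq> X"
    and gnear: "\<And>n y. y \<in> X \<Longrightarrow> dist (g n y) y < \<phi> y"
    and glf: "\<And>x. x \<in> X \<Longrightarrow> \<exists>r>0. finite {n. g n ` X \<inter> ball x r \<noteq> {}}"
  proof (rule core[of X \<phi> "\<lambda>j. HH (E j)" E "\<lambda>j. D (E j)"])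
    show "continuous_on X \<phi>" by (rule phic)
    show "\<And>x. x \<in> X \<Longrightarrow> 0 < \<phi> x \<and> \<phi> x \<le> 1" using phib by blast
    show "\<And>j n. continuous_on ({0..1} \<times> X) (HH (E j) n)" using G unfolding goodH_def by blast
    show "\<And>j n. HH (E j) n ` ({0..1} \<times> X) \<subseteq> X" using G unfolding goodH_def by blast
    show "\<And>j n x. x \<in> X \<Longrightarrow> HH (E j) n (1, x) = x" using G unfolding goodH_def by blast
    show "\<And>j n a t. a \<in> X \<Longrightarrow> t \<in> {0..1} \<Longrightarrow> dist (HH (E j) n (t, a)) a \<le> E j"
      using G unfolding goodH_def by blast
    show "\<And>j n a t. a \<in> X \<Longrightarrow> t \<in> {0..1} \<Longrightarrow> dist (HH (E j) n (t, a)) (HH (E j) n (0, a)) \<le> E j"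
      using G unfolding goodH_def by blast
    show "\<And>j. E j \<le> 1 / 2 ^ (j + 3)"
    proof -
      fix j show "E j \<le> 1 / 2 ^ (j + 3)"
        by (cases j) (simp_all add: E_def add.commute)
    qed
    show "\<And>j. 0 < D (E j)" using G unfolding goodH_def by blast
    show "\<And>j. E (Suc j) \<le> D (E j) / 4" unfolding E_def by simp
    show "\<And>j n m a b. n \<noteq> m \<Longrightarrow> a \<in> X \<Longrightarrow> b \<in> X \<Longrightarrow> D (E j) \<le> dist (HH (E j) n (0, a)) (HH (E j) m (0, b))"
      using G unfolding goodH_def by blast
  qed (rule that; assumption)
  show "\<exists>f :: nat \<Rightarrow> 'a \<Rightarrow> 'a.
           (\<forall>n. continuous_map (top_of_set X) (top_of_set X) (f n) \<and>
                (\<forall>x\<in>topspace (top_of_set X). \<exists>U\<in>\<U>. x \<in> U \<and> f n x \<in> U)) \<and>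
           (\<forall>x\<in>topspace (top_of_set X). \<exists>V. openin (top_of_set X) V \<and> x \<in> V \<and>
                finite {n. f n ` topspace (top_of_set X) \<inter> V \<noteq> {}})"
  proof (intro exI[of _ g] conjI allI ballI)
    fix n
    show "continuous_map (top_of_set X) (top_of_set X) (g n)"
      unfolding continuous_map_subtopology_eu using gc gX by blast
  next
    fix n x assume "x \<in> topspace (top_of_set X)"
    then have x: "x \<in> X" by simp
    obtain U where U: "U \<in> \<U>" "\<forall>y\<in>X. dist x y < \<phi> x \<longrightarrow> y \<in> U" using phiU x by blast
    have "x \<in> U" using U(2) x phib by auto
    moreover have "g n x \<in> U" using U(2) gX[of n] x gnear[OF x, of n] by (auto simp: dist_commute)
    ultimately show "\<exists>U\<in>\<U>. x \<in> U \<and> g n x \<in> U" using U(1) by blast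
  next
    fix x assume "x \<in> topspace (top_of_set X)"
    then have x: "x \<in> X" by simp
    obtain r where r: "r > 0" "finite {n. g n ` X \<inter> ball x r \<noteq> {}}" using glf[OF x] by blast
    have "{n. g n ` X \<inter> (X \<inter> ball x r) \<noteq> {}} = {n. g n ` X \<inter> ball x r \<noteq> {}}"
      using gX by blast
    then show "\<exists>V. openin (top_of_set X) V \<and> x \<in> V \<and> finite {n. g n ` topspace (top_of_set X) \<inter> V \<noteq> {}}"
      using r x by (intro exI[of _ "X \<inter> ball x r"]) (auto intro: openin_open_Int)
  qed
qed

end
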